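(* For each $n\geq1$, $x-1$ divides $T_{1,n}(x,y)$ and $(x-1)^2$ divides $T_{0,n}(x,y)$ in $\mathbb{Z}[x,y]$.
   Context: Graphs are finite; multiple edges are allowed. For a graph $G$, a spanning subgraph $A$ has vertex set $V(G)$ and edge set $E(A)\subseteq E(G)$; $k(A)$ is its number of connected components, $r(A)=|V(G)|-k(A)$, $n(A)=|E(A)|-r(A)$; the weight of $A$ is $(x-1)^{r(G)-r(A)}(y-1)^{n(A)}$. Sierpiński graphs $\Gamma_n$ ($n\ge1$), each with three outmost vertices top, left, right: $\Gamma_1$ is the triangle $K_3$ with its three vertices as top, left, right; $\Gamma_{n+1}$ is obtained from three disjoint copies $G_1,G_2,G_3$ of $\Gamma_n$ by identifying left$(G_1)$ with top$(G_2)$, right$(G_1)$ with top$(G_3)$, right$(G_2)$ with left$(G_3)$; its outmost vertices are top$(G_1)$, left$(G_2)$, right$(G_3)$. $T_{1,n}(x,y)$ is the sum of the weights (with $G=\Gamma_n$) of the spanning subgraphs of $\Gamma_n$ in which the left and right outmost vertices lie in the same component and the top one lies in a different component; $T_{0,n}(x,y)$ is the sum over spanning subgraphs in which the three outmost vertices lie in three distinct components. *)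

theory Defs
  imports "HOL-Computational_Algebra.Polynomial"
begin

text \<open>Gamma_(m+1) is the union of
  a copy of Gamma_m at the origin (G1), a copy translated by (2^(m-1),0) (G2) and a copy
  translated by (0,2^(m-1)) (G3); the identifications left(G1)=top(G2), right(G1)=top(G3),
  right(G2)=left(G3) are realised by coinciding coordinates.\<close>

type_synonym vert = "int \<times> int"

definition shift_edges :: "vert \<Rightarrow> vert set set \<Rightarrow> vert set set" where
  "shift_edges d E = (\<lambda>e. (\<lambda>v. (fst v + fst d, snd v + snd d)) ` e) ` E"

fun sier_edges :: "nat \<Rightarrow> vert set set" where
  "sier_edges 0 = {}"
| "sier_edges (Suc 0) = {{(0,0),(1,0)}, {(0,0),(0,1)}, {(1,0),(0,1)}}"
| "sier_edges (Suc (Suc n)) =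
     (let E = sier_edges (Suc n); L = (2::int) ^ n
      in E \<union> shift_edges (L,0) E \<union> shift_edges (0,L) E)"

definition sier_verts :: "nat \<Rightarrow> vert set" where
  "sier_verts n = \<Union> (sier_edges n)"

definition sier_top :: "nat \<Rightarrow> vert" where "sier_top n = (0,0)"
definition sier_left :: "nat \<Rightarrow> vert" where "sier_left n = ((2::int) ^ (n - 1), 0)"
definition sier_right :: "nat \<Rightarrow> vert" where "sier_right n = (0, (2::int) ^ (n - 1))"

definition connected_in :: "vert set set \<Rightarrow> vert \<Rightarrow> vert \<Rightarrow> bool" where
  "connected_in A u v \<longleftrightarrow> (u, v) \<in> {(a, b). {a, b} \<in> A}\<^sup>*"

definition num_components :: "vert set \<Rightarrow> vert set set \<Rightarrow> nat" where
  "num_components V A = card (V // {(u, v). u \<in> V \<and> v \<in> V \<and> connected_in A u v})"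

definition rank_sg :: "vert set \<Rightarrow> vert set set \<Rightarrow> nat" where
  "rank_sg V A = card V - num_components V A"

definition nullity_sg :: "vert set \<Rightarrow> vert set set \<Rightarrow> nat" where
  "nullity_sg V A = card A - rank_sg V A"

text \<open>Z[x,y] is represented as int poly poly: coefficients are polynomials in x, the outer
  variable is y.\<close>
definition px :: "int poly poly" where "px = [:[:0, 1:]:]"
definition py :: "int poly poly" where "py = [:0, 1:]"

definition weight :: "vert set \<Rightarrow> vert set set \<Rightarrow> vert set set \<Rightarrow> int poly poly" where
  "weight V E A = (px - 1) ^ (rank_sg V E - rank_sg V A) * (py - 1) ^ nullity_sg V A"

definition T1 :: "nat \<Rightarrow> int poly poly" where
  "T1 n = (\<Sum>A\<in>{A. A \<subseteq> sier_edges n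
                 \<and> connected_in A (sier_left n) (sier_right n)
                 \<and> \<not> connected_in A (sier_top n) (sier_left n)}.
             weight (sier_verts n) (sier_edges n) A)"

definition T0 :: "nat \<Rightarrow> int poly poly" where
  "T0 n = (\<Sum>A\<in>{A. A \<subseteq> sier_edges n
                 \<and> \<not> connected_in A (sier_left n) (sier_right n)
                 \<and> \<not> connected_in A (sier_top n) (sier_left n)
                 \<and> \<not> connected_in A (sier_top n) (sier_right n)}.
             weight (sier_verts n) (sier_edges n) A)"

end

theory Submission
  imports Defs
begin

lemma conn_refl: "connected_in A u u"
  by (simp add: connected_in_def)

lemma conn_step: "{a,b} \<in> A \<Longrightarrow> connected_in A a b"
  by (auto simp: connected_in_def)

lemma conn_trans: "connected_in A u v \<Longrightarrow> connected_in A v w \<Longrightarrow> connected_in A u w"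
  unfolding connected_in_def using rtrancl_trans by fast

lemma conn_sym: "connected_in A u v \<Longrightarrow> connected_in A v u"
proof -
  have eq: "{(a, b). {a, b} \<in> A}\<inverse> = {(a, b). {a, b} \<in> A}"
    by (auto simp: insert_commute)
  assume "connected_in A u v"
  hence "(v,u) \<in> ({(a, b). {a, b} \<in> A}\<inverse>)\<^sup>*"
    unfolding connected_in_def by (rule rtrancl_converseI)
  thus ?thesis unfolding connected_in_def eq .
qed

lemma conn_mono: "connected_in A u v \<Longrightarrow> A \<subseteq> B \<Longrightarrow> connected_in B u v"
proof -
  assume a: "connected_in A u v" and s: "A \<subseteq> B"
  have "{(a, b). {a, b} \<in> A} \<subseteq> {(a, b). {a, b} \<in> B}" using s by auto
  thus ?thesis using a unfolding connected_in_def using rtrancl_mono by blast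
qed

lemma conn_shift:
  assumes "connected_in A u v"
  shows "connected_in (shift_edges d A) (fst u + fst d, snd u + snd d) (fst v + fst d, snd v + snd d)"
proof -
  have "(u,v) \<in> {(a, b). {a, b} \<in> A}\<^sup>*" using assms by (simp add: connected_in_def)
  thus ?thesis
  proof (induction rule: rtrancl_induct)
    case base then show ?case by (rule conn_refl)
  next
    case (step y z)
    hence "{y,z} \<in> A" by simp
    hence "{(fst y + fst d, snd y + snd d), (fst z + fst d, snd z + snd d)} \<in> shift_edges d A"
      unfolding shift_edges_def by (rule rev_image_eqI) auto
    thus ?case using step(3) conn_trans conn_step by blast
  qed
qed

lemma finite_edges: "finite (sier_edges n) \<and> (\<forall>e\<in>sier_edges n. finite e)"
proof (induction n rule: sier_edges.induct)
  case 1 then show ?case by simp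
next
  case 2 then show ?case by simp
next
  case (3 n) then show ?case by (auto simp: Let_def shift_edges_def)
qed

lemma finite_verts: "finite (sier_verts n)"
  using finite_edges[of n] by (auto simp: sier_verts_def)

lemma V1: "sier_verts (Suc 0) = {(0,0),(1,0),(0,1)}" by (auto simp: sier_verts_def)

lemma VV_gen:
  fixes L :: int and E
  assumes EE: "F = E \<union> shift_edges (L,0) E \<union> shift_edges (0,L) E"
  shows "\<Union>F = \<Union>E \<union>
     (\<lambda>v. (fst v + L, snd v)) ` \<Union>E \<union> (\<lambda>v. (fst v, snd v + L)) ` \<Union>E"
  unfolding EE shift_edges_def by auto

lemma sier_main:
  "(\<forall>v\<in>sier_verts (Suc m). connected_in (sier_edges (Suc m)) (0,0) v) \<and>
  ((2::int)^m, 0) \<in> sier_verts (Suc m) \<and>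
  (0, (2::int)^m) \<in> sier_verts (Suc m) \<and>
  (0,0) \<in> sier_verts (Suc m)"
proof (induction m)
  case 0
  show ?case unfolding V1 by (auto intro: conn_refl conn_step)
next
  case (Suc m)
  define E where "E = sier_edges (Suc m)"
  define L where "L = (2::int) ^ m"
  have IH1: "\<forall>v\<in>\<Union>E. connected_in E (0,0) v" and lv: "(L,0) \<in> \<Union>E" and rv: "(0,L) \<in> \<Union>E"
    and tv: "(0,0) \<in> \<Union>E"
    using Suc.IH unfolding E_def L_def sier_verts_def by blast+
  have EE: "sier_edges (Suc (Suc m)) = E \<union> shift_edges (L,0) E \<union> shift_edges (0,L) E"
    by (simp add: E_def L_def Let_def)
  define F where "F = sier_edges (Suc (Suc m))"
  have EF: "F = E \<union> shift_edges (L,0) E \<union> shift_edges (0,L) E" using EE F_def by simp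
  have sub1: "E \<subseteq> F" and sub2: "shift_edges (L,0) E \<subseteq> F"
    and sub3: "shift_edges (0,L) E \<subseteq> F" using EF by auto
  have cl: "connected_in F (0,0) (L,0)" using IH1 lv sub1 conn_mono by blast
  have cr: "connected_in F (0,0) (0,L)" using IH1 rv sub1 conn_mono by blast
  have VV: "\<Union>F = \<Union>E \<union>
     (\<lambda>v. (fst v + L, snd v)) ` \<Union>E \<union> (\<lambda>v. (fst v, snd v + L)) ` \<Union>E"
    by (rule VV_gen[OF EF])
  have P1: "\<forall>v\<in>\<Union>F. connected_in F (0,0) v"
  proof
    fix v assume "v \<in> \<Union>F"
    then consider "v \<in> \<Union>E"
      | w where "w \<in> \<Union>E" "v = (fst w + L, snd w)"
      | w where "w \<in> \<Union>E" "v = (fst w, snd w + L)" unfolding VV by blast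
    thus "connected_in F (0,0) v"
    proof cases
      case 1 thus ?thesis using IH1 conn_mono sub1 by blast
    next
      case (2 w)
      have "connected_in E (0,0) w" using IH1 2(1) by blast
      from conn_shift[OF this, of "(L,0)"]
      have "connected_in (shift_edges (L,0) E) (L,0) v" using 2 by simp
      hence "connected_in F (L,0) v" using conn_mono sub2 by blast
      thus ?thesis using cl conn_trans by blast
    next
      case (3 w)
      have "connected_in E (0,0) w" using IH1 3(1) by blast
      from conn_shift[OF this, of "(0,L)"]
      have "connected_in (shift_edges (0,L) E) (0,L) v" using 3 by simp
      hence "connected_in F (0,L) v" using conn_mono sub3 by blast
      thus ?thesis using cr conn_trans by blast
    qed
  qed
  have "(L+L,0) \<in> (\<lambda>v. (fst v + L, snd v)) ` \<Union>E" by (rule rev_image_eqI[OF lv]) simp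
  hence P2: "(L + L, 0) \<in> \<Union>F" unfolding VV by (rule UnI1[OF UnI2])
  have "(0,L+L) \<in> (\<lambda>v. (fst v, snd v + L)) ` \<Union>E" by (rule rev_image_eqI[OF rv]) simp
  hence P3: "(0, L + L) \<in> \<Union>F" unfolding VV by (rule UnI2)
  have P4: "(0,0) \<in> \<Union>F" unfolding VV using tv by (rule UnI1[OF UnI1])
  have LL: "L + L = 2 ^ Suc m" by (simp add: L_def)
  show ?case using P1 P2 P3 P4 unfolding LL F_def sier_verts_def by blast
qed

lemma quot_img: "V // r = (\<lambda>x. r `` {x}) ` V"
  by (auto simp: quotient_def)

lemma ncomp_le: "finite V \<Longrightarrow> num_components V A \<le> card V"
  unfolding num_components_def quot_img by (rule card_image_le)

lemma cls_eq: "u \<in> V \<Longrightarrow> {(u, v). u \<in> V \<and> v \<in> V \<and> connected_in A u v} `` {u}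
   = {v. v \<in> V \<and> connected_in A u v}"
  by auto

lemma ncomp_E:
  assumes "n \<ge> 1"
  shows "num_components (sier_verts n) (sier_edges n) = 1"
proof -
  obtain m where n: "n = Suc m" using assms by (cases n) auto
  let ?V = "sier_verts n"
  have c: "\<forall>v\<in>?V. connected_in (sier_edges n) (0,0) v" using sier_main[of m] n by simp
  have t: "(0,0) \<in> ?V" using sier_main[of m] n by simp
  have "\<And>u. u \<in> ?V \<Longrightarrow> {(u, v). u \<in> ?V \<and> v \<in> ?V \<and> connected_in (sier_edges n) u v} `` {u} = ?V"
    using c by (auto simp: cls_eq intro: conn_trans conn_sym)
  hence "?V // {(u, v). u \<in> ?V \<and> v \<in> ?V \<and> connected_in (sier_edges n) u v} = {?V}"
    unfolding quot_img using t by auto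
  thus ?thesis by (simp add: num_components_def)
qed

lemma two_classes:
  assumes "a \<in> V" "b \<in> V" "\<not> connected_in A a b"
  shows "{(u, v). u \<in> V \<and> v \<in> V \<and> connected_in A u v} `` {a} \<noteq>
         {(u, v). u \<in> V \<and> v \<in> V \<and> connected_in A u v} `` {b}"
proof -
  have "b \<in> {(u, v). u \<in> V \<and> v \<in> V \<and> connected_in A u v} `` {b}"
    using assms by (auto intro: conn_refl)
  moreover have "b \<notin> {(u, v). u \<in> V \<and> v \<in> V \<and> connected_in A u v} `` {a}"
    using assms by auto
  ultimately show ?thesis by blast
qed

lemma term_dvd:
  assumes "n \<ge> 1" "k \<le> num_components (sier_verts n) A"
  shows "(px - 1) ^ (k - 1) dvd weight (sier_verts n) (sier_edges n) A"
proof -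
  let ?V = "sier_verts n"
  have le: "num_components ?V A \<le> card ?V" by (rule ncomp_le[OF finite_verts])
  have "k - 1 \<le> rank_sg ?V (sier_edges n) - rank_sg ?V A"
    using le assms(2) ncomp_E[OF assms(1)] unfolding rank_sg_def by linarith
  hence "(px - 1) ^ (k - 1) dvd (px - 1) ^ (rank_sg ?V (sier_edges n) - rank_sg ?V A)"
    by (rule le_imp_power_dvd)
  thus ?thesis unfolding weight_def by (rule dvd_mult2)
qed

lemma card2: "a \<noteq> b \<Longrightarrow> card {a,b} = 2" by simp
lemma card3: "a \<noteq> b \<Longrightarrow> a \<noteq> c \<Longrightarrow> b \<noteq> c \<Longrightarrow> card {a,b,c} = 3" by simp

theorem lemma3p3:
  fixes n :: nat
  assumes "n \<ge> 1"
  shows "(px - 1) dvd T1 n \<and> (px - 1) ^ 2 dvd T0 n"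
proof -
  obtain m where n: "n = Suc m" using assms by (cases n) auto
  let ?V = "sier_verts n"
  let ?R = "\<lambda>A. {(u, v). u \<in> ?V \<and> v \<in> ?V \<and> connected_in A u v}"
  have tv: "sier_top n \<in> ?V" and lv: "sier_left n \<in> ?V" and rv: "sier_right n \<in> ?V"
    using sier_main[of m] n by (simp_all add: sier_top_def sier_left_def sier_right_def)
  have fq: "finite (?V // ?R A)" for A unfolding quot_img using finite_verts by simp
  have inq: "u \<in> ?V \<Longrightarrow> ?R A `` {u} \<in> ?V // ?R A" for u A unfolding quot_img by blast
  have "(px - 1) dvd T1 n"
    unfolding T1_def
  proof (rule dvd_sum)
    fix A assume "A \<in> {A. A \<subseteq> sier_edges n \<and> connected_in A (sier_left n) (sier_right n)
                 \<and> \<not> connected_in A (sier_top n) (sier_left n)}"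
    hence nc: "\<not> connected_in A (sier_top n) (sier_left n)" by simp
    have "{?R A `` {sier_top n}, ?R A `` {sier_left n}} \<subseteq> ?V // ?R A" by (intro insert_subsetI empty_subsetI inq tv lv)
    hence "card {?R A `` {sier_top n}, ?R A `` {sier_left n}} \<le> num_components ?V A"
      unfolding num_components_def by (rule card_mono[OF fq])
    moreover have "card {?R A `` {sier_top n}, ?R A `` {sier_left n}} = 2"
      using two_classes[OF tv lv nc] by (rule card2)
    ultimately have "2 \<le> num_components ?V A" by simp
    from term_dvd[OF assms this] show "(px - 1) dvd weight ?V (sier_edges n) A" by simp
  qed
  moreover have "(px - 1) ^ 2 dvd T0 n"
    unfolding T0_def
  proof (rule dvd_sum)
    fix A assume "A \<in> {A. A \<subseteq> sier_edges n
                 \<and> \<not> connected_in A (sier_left n) (sier_right n)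
                 \<and> \<not> connected_in A (sier_top n) (sier_left n)
                 \<and> \<not> connected_in A (sier_top n) (sier_right n)}"
    hence nc1: "\<not> connected_in A (sier_top n) (sier_left n)"
      and nc2: "\<not> connected_in A (sier_top n) (sier_right n)"
      and nc3: "\<not> connected_in A (sier_left n) (sier_right n)" by simp_all
    have "{?R A `` {sier_top n}, ?R A `` {sier_left n}, ?R A `` {sier_right n}} \<subseteq> ?V // ?R A"
      by (intro insert_subsetI empty_subsetI inq tv lv rv)
    hence "card {?R A `` {sier_top n}, ?R A `` {sier_left n}, ?R A `` {sier_right n}} \<le> num_components ?V A"
      unfolding num_components_def by (rule card_mono[OF fq])
    moreover have "card {?R A `` {sier_top n}, ?R A `` {sier_left n}, ?R A `` {sier_right n}} = 3"
      by (rule card3[OF two_classes[OF tv lv nc1] two_classes[OF tv rv nc2] two_classes[OF lv rv nc3]])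
    ultimately have "3 \<le> num_components ?V A" by simp
    from term_dvd[OF assms this] show "(px - 1) ^ 2 dvd weight ?V (sier_edges n) A" by simp
  qed
  ultimately show ?thesis by blast
qed

end
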